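(* Let $\mathbf{x}$ be a random vector in $\mathbb{R}^d$ and let $\beta\in\mathbb{R}^d$ be a fixed vector. Let $\mathcal{S}_1,\dots,\mathcal{S}_m\subset\{1,\dots,d\}$ be non-empty, pairwise disjoint index sets with $d_i=|\mathcal{S}_i|$, and for each $i$ let $\mathbf{x}^{(i)}=[\mathbf{x}_r, r\in\mathcal{S}_i]\in\mathbb{R}^{d_i}$ and $\beta^{(i)}=[\beta_r, r\in\mathcal{S}_i]\in\mathbb{R}^{d_i}$. Assume $\mathbf{x}^{(i)}$ has probability density $p_i$ with respect to Lebesgue measure $\mu_i$ on $\mathbb{R}^{d_i}$. For each $i$, fix a number of levels $K_i$ and consider quantizers $Q_i:\mathbb{R}^{d_i}\to\{c^{(i)}_1,\dots,c^{(i)}_{K_i}\}$ of the form $Q_i(x^{(i)})=c^{(i)}_k$ if $x^{(i)}\in\mathcal{D}^{(i)}_k$, where $c^{(i)}_k\in\mathbb{R}^{d_i}$ and $\mathcal{D}^{(i)}_1,\dots,\mathcal{D}^{(i)}_{K_i}$ partition $\mathbb{R}^{d_i}$. Set $\hat{\mathbf y}=\langle \mathbf{x},\beta\rangle$, $\tilde{\mathbf{x}}^{(i)}=Q_i(\mathbf{x}^{(i)})$, and $\tilde{\mathbf y}=\sum_{i=1}^m\langle\tilde{\mathbf{x}}^{(i)},\beta^{(i)}\rangle$ (i.e. $\langle\tilde{\mathbf x},\beta\rangle$ where $\tilde{\mathbf x}$ is the vector obtained by replacing each block $\mathbf x^{(i)}$ by $\tilde{\mathbf x}^{(i)}$). Let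 $Q_1,\dots,Q_m$ be optimal quantizers for the problem $\min_{Q_1,\dots,Q_m}\mathbb{E}[(\tilde{\mathbf y}-\hat{\mathbf y})^2]$. Then simultaneously for every $i\in\{1,\dots,m\}$, $Q_i$ has the structure $$Q_i(x^{(i)})=\bar c^{(i)}_k\quad\text{if } x^{(i)}\in\bar{\mathcal{D}}^{(i)}_k,\ k\in\{1,\dots,K_i\},$$ where $\bar c^{(i)}_k$ and $\bar{\mathcal D}^{(i)}_k$ are minimizers of $$\min_{c^{(i)}_k,\mathcal{D}^{(i)}_k}\sum_{k=1}^{K_i}\int_{\mathcal{D}^{(i)}_k} f_i(c^{(i)}_k,x^{(i)})\,p_i(x^{(i)})\,d\mu_i(x^{(i)}),$$ with $$f_i(c,x^{(i)})=\mathbb{E}\Big[\Big(\langle c-x^{(i)},\beta^{(i)}\rangle+\sum_{i'\neq i}\langle\tilde{\mathbf{x}}^{(i')}-\mathbf{x}^{(i')},\beta^{(i')}\rangle\Big)^2\,\Big|\,\mathbf{x}^{(i)}=x^{(i)}\Big],$$ where for $i'\neq i$, $\tilde{\mathbf{x}}^{(i')}=Q_{i'}(\mathbf{x}^{(i')})$ is obtained from the optimal quantizer $Q_{i'}$.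
   Context: Expectations are over the distribution of $\mathbf{x}$ with $\beta$ held fixed. $\langle\cdot,\cdot\rangle$ denotes the Euclidean inner product. The minimization defining $\bar c^{(i)}_k,\bar{\mathcal D}^{(i)}_k$ is over codepoints $c^{(i)}_k\in\mathbb{R}^{d_i}$ and partitions $\{\mathcal D^{(i)}_k\}_{k=1}^{K_i}$ of $\mathbb{R}^{d_i}$, with the other quantizers $Q_{i'}$, $i'\neq i$, fixed at their optimal values. *)

theory Defs
  imports "HOL-Probability.Probability"
begin

text \<open>Lebesgue measure on the block space R^{d_i}, realised as extensional
  functions on the index set S (coordinates outside S are undefined).\<close>
definition blk_meas :: "'d set \<Rightarrow> ('d \<Rightarrow> real) measure" where
  "blk_meas S = PiM S (\<lambda>_. lborel)"

definition blk :: "'d set \<Rightarrow> real ^ 'd \<Rightarrow> ('d \<Rightarrow> real)" where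
  "blk S v = restrict (\<lambda>r. v $ r) S"

definition blk_inner :: "'d set \<Rightarrow> ('d \<Rightarrow> real) \<Rightarrow> ('d \<Rightarrow> real) \<Rightarrow> real" where
  "blk_inner S u v = (\<Sum>r\<in>S. u r * v r)"

definition is_quantizer ::
  "'d set \<Rightarrow> nat \<Rightarrow> (nat \<Rightarrow> ('d \<Rightarrow> real)) \<Rightarrow> (nat \<Rightarrow> ('d \<Rightarrow> real) set) \<Rightarrow> bool" where
  "is_quantizer S K c D \<longleftrightarrow>
     (\<forall>k\<in>{1..K}. c k \<in> space (blk_meas S)) \<and>
     (\<forall>k\<in>{1..K}. D k \<in> sets (blk_meas S)) \<and>
     disjoint_family_on D {1..K} \<and>
     (\<Union>k\<in>{1..K}. D k) = space (blk_meas S)"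

definition quantize ::
  "nat \<Rightarrow> (nat \<Rightarrow> ('d \<Rightarrow> real)) \<Rightarrow> (nat \<Rightarrow> ('d \<Rightarrow> real) set) \<Rightarrow> ('d \<Rightarrow> real) \<Rightarrow> ('d \<Rightarrow> real)" where
  "quantize K c D y = c (THE k. k \<in> {1..K} \<and> y \<in> D k)"

definition blk_err ::
  "'d set \<Rightarrow> nat \<Rightarrow> (nat \<Rightarrow> ('d \<Rightarrow> real)) \<Rightarrow> (nat \<Rightarrow> ('d \<Rightarrow> real) set)
    \<Rightarrow> real ^ 'd \<Rightarrow> real ^ 'd \<Rightarrow> real" where
  "blk_err S K c D beta v =
     blk_inner S (\<lambda>r. quantize K c D (blk S v) r - v $ r) (\<lambda>r. beta $ r)"

definition quant_mse ::
  "'a measure \<Rightarrow> ('a \<Rightarrow> real ^ 'd) \<Rightarrow> real ^ 'd \<Rightarrow> nat \<Rightarrow> (nat \<Rightarrow> 'd set) \<Rightarrow> (nat \<Rightarrow> nat)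
    \<Rightarrow> (nat \<Rightarrow> nat \<Rightarrow> ('d \<Rightarrow> real)) \<Rightarrow> (nat \<Rightarrow> nat \<Rightarrow> ('d \<Rightarrow> real) set) \<Rightarrow> ennreal" where
  "quant_mse M X beta m S K c D =
     (\<integral>\<^sup>+ \<omega>. ennreal ((\<Sum>i\<in>{1..m}. blk_err (S i) (K i) (c i) (D i) beta (X \<omega>))\<^sup>2) \<partial>M)"

definition blk_target ::
  "real ^ 'd \<Rightarrow> nat \<Rightarrow> (nat \<Rightarrow> 'd set) \<Rightarrow> (nat \<Rightarrow> nat)
    \<Rightarrow> (nat \<Rightarrow> nat \<Rightarrow> ('d \<Rightarrow> real)) \<Rightarrow> (nat \<Rightarrow> nat \<Rightarrow> ('d \<Rightarrow> real) set)
    \<Rightarrow> nat \<Rightarrow> ('d \<Rightarrow> real) \<Rightarrow> real ^ 'd \<Rightarrow> real" where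
  "blk_target beta m S K c D i cc v =
     (blk_inner (S i) (\<lambda>r. cc r - v $ r) (\<lambda>r. beta $ r)
      + (\<Sum>i'\<in>{1..m} - {i}. blk_err (S i') (K i') (c i') (D i') beta v))\<^sup>2"

text \<open>f is a version of the conditional expectation
  f(cc, y) = E[ blk_target ... cc (X) | X^(i) = y ], i.e. for every codepoint cc,
  f cc is measurable on R^{d_i} and integrates like the target over every
  event {X^(i) \<in> A}, against the law of X^(i), which is p \<mu>_i.\<close>
definition is_cond_exp_version ::
  "'a measure \<Rightarrow> ('a \<Rightarrow> real ^ 'd) \<Rightarrow> real ^ 'd \<Rightarrow> nat \<Rightarrow> (nat \<Rightarrow> 'd set) \<Rightarrow> (nat \<Rightarrow> nat)
    \<Rightarrow> (nat \<Rightarrow> nat \<Rightarrow> ('d \<Rightarrow> real)) \<Rightarrow> (nat \<Rightarrow> nat \<Rightarrow> ('d \<Rightarrow> real) set) \<Rightarrow> nat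
    \<Rightarrow> (('d \<Rightarrow> real) \<Rightarrow> ennreal)
    \<Rightarrow> (('d \<Rightarrow> real) \<Rightarrow> ('d \<Rightarrow> real) \<Rightarrow> ennreal) \<Rightarrow> bool" where
  "is_cond_exp_version M X beta m S K c D i p f \<longleftrightarrow>
     (\<forall>cc\<in>space (blk_meas (S i)).
        f cc \<in> borel_measurable (blk_meas (S i)) \<and>
        (\<forall>A\<in>sets (blk_meas (S i)).
           (\<integral>\<^sup>+ y. f cc y * p y * indicator A y \<partial>blk_meas (S i)) =
           (\<integral>\<^sup>+ \<omega>. ennreal (blk_target beta m S K c D i cc (X \<omega>))
                     * indicator A (blk (S i) (X \<omega>)) \<partial>M)))"

definition blk_objective ::
  "'d set \<Rightarrow> nat \<Rightarrow> (('d \<Rightarrow> real) \<Rightarrow> ennreal) \<Rightarrow> (('d \<Rightarrow> real) \<Rightarrow> ('d \<Rightarrow> real) \<Rightarrow> ennreal)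
    \<Rightarrow> (nat \<Rightarrow> ('d \<Rightarrow> real)) \<Rightarrow> (nat \<Rightarrow> ('d \<Rightarrow> real) set) \<Rightarrow> ennreal" where
  "blk_objective S K p f c D =
     (\<Sum>k\<in>{1..K}. \<integral>\<^sup>+ y. f (c k) y * p y * indicator (D k) y \<partial>blk_meas S)"

end

theory Submission
  imports Defs
begin

lemma quant_unique:
  assumes q: "is_quantizer S K c D" and y: "y \<in> space (blk_meas S)"
  shows "\<exists>k. k \<in> {1..K} \<and> y \<in> D k \<and> quantize K c D y = c k
           \<and> (\<forall>k'\<in>{1..K}. y \<in> D k' \<longrightarrow> k' = k)"
proof -
  note qq = q[unfolded is_quantizer_def]
  have cov: "(\<Union>k\<in>{1..K}. D k) = space (blk_meas S)" using qq by (elim conjE)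
  have dj: "disjoint_family_on D {1..K}" using qq by (elim conjE)
  have "\<exists>k\<in>{1..K}. y \<in> D k" using cov y by (metis UN_iff)
  then obtain k where k: "k \<in> {1..K}" "y \<in> D k" by (elim bexE)
  have uq: "\<forall>k'\<in>{1..K}. y \<in> D k' \<longrightarrow> k' = k"
  proof (intro ballI impI)
    fix k' assume a: "k' \<in> {1..K}" "y \<in> D k'"
    show "k' = k"
    proof (rule ccontr)
      assume "k' \<noteq> k"
      then have "D k' \<inter> D k = {}" using disjoint_family_onD[OF dj a(1) k(1)] by simp
      then show False using a(2) k(2) by (simp add: disjoint_iff)
    qed
  qed
  have "(THE k. k \<in> {1..K} \<and> y \<in> D k) = k"
  proof (rule the_equality)
    show "k \<in> {1..K} \<and> y \<in> D k" using k by (rule conjI)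
  next
    fix x assume "x \<in> {1..K} \<and> y \<in> D x"
    then show "x = k" using uq by blast
  qed
  then have "quantize K c D y = c k" unfolding quantize_def by simp
  then show ?thesis using k uq by blast
qed

lemma quant_sum:
  assumes q: "is_quantizer S K c D" and y: "y \<in> space (blk_meas S)"
  shows "quantize K c D y r = (\<Sum>k\<in>{1..K}. indicator (D k) y * c k r)"
proof -
  obtain k where k: "k \<in> {1..K}" "y \<in> D k" "quantize K c D y = c k"
     "\<forall>k'\<in>{1..K}. y \<in> D k' \<longrightarrow> k' = k"
    using quant_unique[OF q y] by blast
  have "(\<Sum>k'\<in>{1..K}. indicator (D k') y * c k' r) = (\<Sum>k'\<in>{k}. indicator (D k') y * c k' r)"
  proof (rule sum.mono_neutral_right)
    show "\<forall>i\<in>{1..K} - {k}. indicator (D i) y * c i r = 0"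
    proof
      fix x assume "x \<in> {1..K} - {k}"
      then have "y \<notin> D x" using k(4) by blast
      then show "indicator (D x) y * c x r = 0" by simp
    qed
  qed (use k(1) in auto)
  then show ?thesis using k(1-3) by (simp add: indicator_def)
qed

lemma comp_meas:
  fixes X :: "'a \<Rightarrow> real ^ 'd"
  assumes "X \<in> borel_measurable M"
  shows "(\<lambda>\<omega>. X \<omega> $ r) \<in> borel_measurable M"
proof -
  have "(\<lambda>x::real^'d. x $ r) \<in> borel_measurable borel"
    by (rule borel_measurable_continuous_onI, rule continuous_on_component[OF continuous_on_id])
  then show ?thesis using measurable_compose[OF assms] by blast
qed

lemma ind_meas:
  assumes Y: "Y \<in> measurable M N" and A: "A \<in> sets N"
  shows "(\<lambda>\<omega>. indicator A (Y \<omega>) :: real) \<in> borel_measurable M"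
  using measurable_compose[OF Y borel_measurable_indicator[OF A]] by simp

lemma ind_meas_e:
  assumes Y: "Y \<in> measurable M N" and A: "A \<in> sets N"
  shows "(\<lambda>\<omega>. indicator A (Y \<omega>) :: ennreal) \<in> borel_measurable M"
  using measurable_compose[OF Y borel_measurable_indicator[OF A]] by simp

lemma err_meas:
  fixes X :: "'a \<Rightarrow> real ^ 'd"
  assumes X: "X \<in> borel_measurable M"
    and Y: "(\<lambda>\<omega>. blk S (X \<omega>)) \<in> measurable M (blk_meas S)"
    and q: "is_quantizer S K c D"
  shows "(\<lambda>\<omega>. blk_err S K c D beta (X \<omega>)) \<in> borel_measurable M"
proof -
  have eq: "\<And>\<omega>. \<omega> \<in> space M \<Longrightarrow> blk_err S K c D beta (X \<omega>) =
     (\<Sum>r\<in>S. ((\<Sum>k\<in>{1..K}. indicator (D k) (blk S (X \<omega>)) * c k r) - X \<omega> $ r) * beta $ r)"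
    unfolding blk_err_def blk_inner_def
    using quant_sum[OF q] measurable_space[OF Y] by simp
  have Dk: "\<And>k. k \<in> {1..K} \<Longrightarrow> D k \<in> sets (blk_meas S)" using q unfolding is_quantizer_def by blast
  let ?h = "\<lambda>\<omega>. \<Sum>r\<in>S. ((\<Sum>k\<in>{1..K}. indicator (D k) (blk S (X \<omega>)) * c k r) - X \<omega> $ r) * beta $ r"
  have cong: "(\<lambda>\<omega>. blk_err S K c D beta (X \<omega>)) \<in> borel_measurable M \<longleftrightarrow> ?h \<in> borel_measurable M"
    by (rule measurable_cong) (rule eq)
  have "?h \<in> borel_measurable M"
    by (intro borel_measurable_sum borel_measurable_times borel_measurable_diff
        borel_measurable_const comp_meas[OF X] ind_meas[OF Y Dk]) auto
  then show ?thesis using cong by blast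
qed

lemma key:
  fixes M :: "'a measure" and X :: "'a \<Rightarrow> real ^ 'd" and beta :: "real ^ 'd"
    and m :: nat and S :: "nat \<Rightarrow> 'd set" and K :: "nat \<Rightarrow> nat"
    and c :: "nat \<Rightarrow> nat \<Rightarrow> ('d \<Rightarrow> real)" and D :: "nat \<Rightarrow> nat \<Rightarrow> ('d \<Rightarrow> real) set"
  assumes X: "X \<in> borel_measurable M"
    and Y: "\<forall>i\<in>{1..m}. (\<lambda>\<omega>. blk (S i) (X \<omega>)) \<in> measurable M (blk_meas (S i))"
    and qs: "\<forall>i\<in>{1..m}. is_quantizer (S i) (K i) (c i) (D i)"
    and i: "i \<in> {1..m}"
    and f: "is_cond_exp_version M X beta m S K c D i pp f"
    and q: "is_quantizer (S i) (K i) cc DD"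
  shows "blk_objective (S i) (K i) pp f cc DD = quant_mse M X beta m S K (c(i:=cc)) (D(i:=DD))"
proof -
  have Yi: "(\<lambda>\<omega>. blk (S i) (X \<omega>)) \<in> measurable M (blk_meas (S i))" using Y i by blast
  have cck: "\<And>k. k \<in> {1..K i} \<Longrightarrow> cc k \<in> space (blk_meas (S i))" using q unfolding is_quantizer_def by blast
  have DDk: "\<And>k. k \<in> {1..K i} \<Longrightarrow> DD k \<in> sets (blk_meas (S i))" using q unfolding is_quantizer_def by blast
  let ?g = "\<lambda>k \<omega>. ennreal (blk_target beta m S K c D i (cc k) (X \<omega>)) * indicator (DD k) (blk (S i) (X \<omega>))"
  have s1: "blk_objective (S i) (K i) pp f cc DD = (\<Sum>k\<in>{1..K i}. integral\<^sup>N M (?g k))"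
    unfolding blk_objective_def
    using f cck DDk unfolding is_cond_exp_version_def by (intro sum.cong) auto
  have errm: "\<And>i'. i' \<in> {1..m} \<Longrightarrow> (\<lambda>\<omega>. blk_err (S i') (K i') (c i') (D i') beta (X \<omega>)) \<in> borel_measurable M"
    using err_meas[OF X] Y qs by blast
  have gm: "\<And>k. k \<in> {1..K i} \<Longrightarrow> ?g k \<in> borel_measurable M"
    unfolding blk_target_def blk_inner_def
    by (intro borel_measurable_times_ennreal measurable_compose[OF _ measurable_ennreal]
        borel_measurable_power borel_measurable_add borel_measurable_sum borel_measurable_times
        borel_measurable_diff borel_measurable_const comp_meas[OF X] errm ind_meas_e[OF Yi DDk]) auto
  have s2: "(\<Sum>k\<in>{1..K i}. integral\<^sup>N M (?g k)) = (\<integral>\<^sup>+ \<omega>. (\<Sum>k\<in>{1..K i}. ?g k \<omega>) \<partial>M)"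
    by (rule nn_integral_sum[symmetric]) (rule gm)
  have s3: "(\<Sum>k\<in>{1..K i}. ?g k \<omega>) =
     ennreal ((\<Sum>i'\<in>{1..m}. blk_err (S i') (K i') ((c(i:=cc)) i') ((D(i:=DD)) i') beta (X \<omega>))\<^sup>2)"
    if w: "\<omega> \<in> space M" for \<omega>
  proof -
    have ysp: "blk (S i) (X \<omega>) \<in> space (blk_meas (S i))" using measurable_space[OF Yi w] .
    obtain k where k: "k \<in> {1..K i}" "blk (S i) (X \<omega>) \<in> DD k" "quantize (K i) cc DD (blk (S i) (X \<omega>)) = cc k"
     "\<forall>k'\<in>{1..K i}. blk (S i) (X \<omega>) \<in> DD k' \<longrightarrow> k' = k"
      using quant_unique[OF q ysp] by blast
    have "(\<Sum>k'\<in>{1..K i}. ?g k' \<omega>) = (\<Sum>k'\<in>{k}. ?g k' \<omega>)"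
    proof (rule sum.mono_neutral_right)
      show "\<forall>j\<in>{1..K i} - {k}. ?g j \<omega> = 0"
      proof
        fix x assume "x \<in> {1..K i} - {k}"
        then have "blk (S i) (X \<omega>) \<notin> DD x" using k(4) by blast
        then show "?g x \<omega> = 0" by simp
      qed
    qed (use k(1) in auto)
    also have "\<dots> = ennreal (blk_target beta m S K c D i (cc k) (X \<omega>))" using k(2) by simp
    also have "blk_target beta m S K c D i (cc k) (X \<omega>) =
       (\<Sum>i'\<in>{1..m}. blk_err (S i') (K i') ((c(i:=cc)) i') ((D(i:=DD)) i') beta (X \<omega>))\<^sup>2"
    proof -
      have "(\<Sum>i'\<in>{1..m}. blk_err (S i') (K i') ((c(i:=cc)) i') ((D(i:=DD)) i') beta (X \<omega>))
          = blk_err (S i) (K i) cc DD beta (X \<omega>) +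
            (\<Sum>i'\<in>{1..m} - {i}. blk_err (S i') (K i') (c i') (D i') beta (X \<omega>))"
        by (subst sum.remove[OF _ i]) (auto intro!: sum.cong)
      moreover have "blk_err (S i) (K i) cc DD beta (X \<omega>) =
          blk_inner (S i) (\<lambda>r. cc k r - X \<omega> $ r) (\<lambda>r. beta $ r)"
        unfolding blk_err_def using k(3) by simp
      ultimately show ?thesis unfolding blk_target_def by simp
    qed
    finally show ?thesis .
  qed
  show ?thesis
    unfolding s1 s2 quant_mse_def by (intro nn_integral_cong) (use s3 in simp)
qed

theorem lemma1:
  fixes M :: "'a measure" and X :: "'a \<Rightarrow> real ^ 'd" and beta :: "real ^ 'd"
    and m :: nat and S :: "nat \<Rightarrow> 'd set" and K :: "nat \<Rightarrow> nat"
    and p :: "nat \<Rightarrow> ('d \<Rightarrow> real) \<Rightarrow> ennreal"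
    and c :: "nat \<Rightarrow> nat \<Rightarrow> ('d \<Rightarrow> real)" and D :: "nat \<Rightarrow> nat \<Rightarrow> ('d \<Rightarrow> real) set"
  assumes "prob_space M"
    and "X \<in> borel_measurable M"
    and "\<forall>i\<in>{1..m}. S i \<noteq> {}"
    and "disjoint_family_on S {1..m}"
    and "\<forall>i\<in>{1..m}. distributed M (blk_meas (S i)) (\<lambda>\<omega>. blk (S i) (X \<omega>)) (p i)"
    and "\<forall>i\<in>{1..m}. is_quantizer (S i) (K i) (c i) (D i)"
    and "\<forall>c' D'. (\<forall>i\<in>{1..m}. is_quantizer (S i) (K i) (c' i) (D' i)) \<longrightarrow>
           quant_mse M X beta m S K c D \<le> quant_mse M X beta m S K c' D'"
  shows "\<forall>i\<in>{1..m}. \<forall>f. is_cond_exp_version M X beta m S K c D i (p i) f \<longrightarrow>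
           (\<forall>cc DD. is_quantizer (S i) (K i) cc DD \<longrightarrow>
              blk_objective (S i) (K i) (p i) f (c i) (D i)
                \<le> blk_objective (S i) (K i) (p i) f cc DD)"
proof (intro ballI allI impI)
  fix i f cc DD
  assume i: "i \<in> {1..m}" and f: "is_cond_exp_version M X beta m S K c D i (p i) f"
    and q: "is_quantizer (S i) (K i) cc DD"
  have Y: "\<forall>i\<in>{1..m}. (\<lambda>\<omega>. blk (S i) (X \<omega>)) \<in> measurable M (blk_meas (S i))"
    using assms(5) unfolding distributed_def by blast
  have qi: "is_quantizer (S i) (K i) (c i) (D i)" using assms(6) i by blast
  have "blk_objective (S i) (K i) (p i) f (c i) (D i) = quant_mse M X beta m S K (c(i:=c i)) (D(i:=D i))"
    by (rule key[OF assms(2) Y assms(6) i f qi])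
  also have "\<dots> = quant_mse M X beta m S K c D" by simp
  also have "\<dots> \<le> quant_mse M X beta m S K (c(i:=cc)) (D(i:=DD))"
    using assms(7) assms(6) q by auto
  also have "\<dots> = blk_objective (S i) (K i) (p i) f cc DD"
    by (rule key[OF assms(2) Y assms(6) i f q, symmetric])
  finally show "blk_objective (S i) (K i) (p i) f (c i) (D i) \<le> blk_objective (S i) (K i) (p i) f cc DD" .
qed

end
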